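(* Let $a\neq b$ be letters and $w=a^{n_1}b^{n_2}$ with $n_1,n_2\ge1$. Then every element of $\mathtt{BR}(w)$ is rich.
   Context: For a word $w=w_1\cdots w_n$, $w^R=w_n\cdots w_1$; $w$ is a palindrome if $w=w^R$; a factor of $w$ is a word $u$ with $w=puq$. A word $w$ is rich if the number of distinct nonempty palindromic factors of $w$ equals $|w|$. The block reversal of a nonempty word $w$ is $\mathtt{BR}(w)=\{B_t\cdots B_1 : w=B_1\cdots B_t,\ t\ge1,\ \text{each } B_i \text{ nonempty}\}$. *)

theory Defs
  imports Main
begin

definition is_factor :: "'a list \<Rightarrow> 'a list \<Rightarrow> bool" where
  "is_factor u w \<longleftrightarrow> (\<exists>p q. w = p @ u @ q)"

definition palindrome :: "'a list \<Rightarrow> bool" where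
  "palindrome w \<longleftrightarrow> w = rev w"

definition rich :: "'a list \<Rightarrow> bool" where
  "rich w \<longleftrightarrow> card {u. u \<noteq> [] \<and> is_factor u w \<and> palindrome u} = length w"

definition BR :: "'a list \<Rightarrow> 'a list set" where
  "BR w = {concat (rev Bs) | Bs. Bs \<noteq> [] \<and> concat Bs = w \<and> (\<forall>B\<in>set Bs. B \<noteq> [])}"

end

theory Submission
  imports Defs
begin

definition PF :: "'a list \<Rightarrow> 'a list set" where
  "PF w = {u. u \<noteq> [] \<and> is_factor u w \<and> palindrome u}"

lemma PF_finite: "finite (PF w)"
proof -
  have "PF w \<subseteq> {u. set u \<subseteq> set w \<and> length u \<le> length w}"
  proof
    fix u assume "u \<in> PF w"
    then obtain p q where "w = p @ u @ q" by (auto simp: PF_def is_factor_def)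
    then show "u \<in> {u. set u \<subseteq> set w \<and> length u \<le> length w}" by auto
  qed
  moreover have "finite {u. set u \<subseteq> set w \<and> length u \<le> length w}"
    by (rule finite_lists_length_le) simp
  ultimately show ?thesis by (rule finite_subset)
qed

lemma new_suffix:
  assumes "is_factor u (w @ [c])" "\<not> is_factor u w"
  shows "\<exists>p. w @ [c] = p @ u"
proof -
  obtain p q where pq: "w @ [c] = p @ u @ q" using assms(1) by (auto simp: is_factor_def)
  show ?thesis
  proof (cases q rule: rev_cases)
    case Nil then show ?thesis using pq by auto
  next
    case (snoc q' d)
    then have "w = p @ u @ q'" using pq by simp
    then show ?thesis using assms(2) by (auto simp: is_factor_def)
  qed
qed

lemma new_unique_aux:
  assumes "u1 \<in> PF (w @ [c]) - PF w" "u2 \<in> PF (w @ [c]) - PF w"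
    "length u1 \<le> length u2"
  shows "u1 = u2"
proof -
  have f1: "is_factor u1 (w@[c])" "\<not> is_factor u1 w" "palindrome u1"
    using assms(1) by (auto simp: PF_def)
  have f2: "is_factor u2 (w@[c])" "\<not> is_factor u2 w" "palindrome u2"
    using assms(2) by (auto simp: PF_def)
  obtain p1 where p1: "w @ [c] = p1 @ u1" using new_suffix[OF f1(1) f1(2)] by blast
  obtain p2 where p2: "w @ [c] = p2 @ u2" using new_suffix[OF f2(1) f2(2)] by blast
  have "length p1 + length u1 = length p2 + length u2"
    using arg_cong[OF p1, of length] arg_cong[OF p2, of length] by simp
  then have "length p2 \<le> length p1" using assms(3) by simp
  moreover have "p2 @ u2 = p1 @ u1" using p1 p2 by simp
  ultimately obtain r where r: "p1 = p2 @ r" "u2 = r @ u1"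
  proof -
    assume le: "length p2 \<le> length p1" and eq: "p2 @ u2 = p1 @ u1"
      and th: "\<And>r. p1 = p2 @ r \<Longrightarrow> u2 = r @ u1 \<Longrightarrow> thesis"
    have "take (length p2) (p2 @ u2) = take (length p2) (p1 @ u1)" using eq by simp
    then have t: "take (length p2) p1 = p2" using le by simp
    have "drop (length p2) (p2 @ u2) = drop (length p2) (p1 @ u1)" using eq by simp
    then have d: "u2 = drop (length p2) p1 @ u1" using le by simp
    show thesis
      apply (rule th[of "drop (length p2) p1"])
      using t d append_take_drop_id[of "length p2" p1] by simp_all
  qed
  note u2 = r(2)
  have e2: "u2 = rev u2" using f2(3) unfolding palindrome_def .
  have e1: "rev u1 = u1" using f1(3) unfolding palindrome_def by simp
  have "rev u2 = rev u1 @ rev r" using u2 by simp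
  with e2 have "u2 = rev u1 @ rev r" by (rule trans)
  then have "u2 = u1 @ rev r" using e1 by simp
  show ?thesis
  proof (cases "rev r" rule: rev_cases)
    case Nil then show ?thesis using \<open>u2 = u1 @ rev r\<close> by simp
  next
    case (snoc r' d)
    have "w @ [c] = p2 @ u1 @ r' @ [d]" using p2 \<open>u2 = u1 @ rev r\<close> snoc by simp
    then have "w = p2 @ u1 @ r'" by simp
    then show ?thesis using f1(2) by (auto simp: is_factor_def)
  qed
qed

lemma fac_snoc: "is_factor u w \<Longrightarrow> is_factor u (w @ [c])"
proof -
  assume "is_factor u w"
  then obtain p q where "w = p @ u @ q" unfolding is_factor_def by blast
  then have "w @ [c] = p @ u @ (q @ [c])" by simp
  then show ?thesis unfolding is_factor_def by blast
qed

lemma PF_mono: "PF w \<subseteq> PF (w @ [c])"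
proof
  fix u assume "u \<in> PF w"
  then have "u \<noteq> []" "is_factor u w" "palindrome u" unfolding PF_def by auto
  then show "u \<in> PF (w @ [c])" unfolding PF_def using fac_snoc[of u w c] by blast
qed

lemma PF_snoc: "card (PF (w @ [c])) \<le> Suc (card (PF w))"
proof -
  let ?N = "PF (w @ [c]) - PF w"
  have "card ?N \<le> Suc 0"
  proof (subst card_le_Suc0_iff_eq)
    show "finite ?N" by (rule finite_Diff[OF PF_finite])
    show "\<forall>x\<in>?N. \<forall>y\<in>?N. x = y"
    proof (intro ballI)
      fix x y assume "x \<in> ?N" "y \<in> ?N"
      note hx = \<open>x \<in> ?N\<close> and hy = \<open>y \<in> ?N\<close>
      show "x = y"
      proof (cases "length x \<le> length y")
        case True then show ?thesis by (rule new_unique_aux[OF hx hy])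
      next
        case False then have "length y \<le> length x" by simp
        then have "y = x" by (rule new_unique_aux[OF hy hx])
        then show ?thesis by (rule sym)
      qed
    qed
  qed
  moreover have e: "PF w \<union> ?N = PF (w @ [c])"
    unfolding Un_Diff_cancel using PF_mono[of w c] by (rule sup.absorb2)
  have "card (PF w \<union> ?N) \<le> card (PF w) + card ?N" by (rule card_Un_le)
  then have "card (PF (w @ [c])) \<le> card (PF w) + card ?N" unfolding e .
  with \<open>card ?N \<le> Suc 0\<close> show ?thesis by linarith
qed

lemma PF_le: "card (PF w) \<le> length w"
proof (induction w rule: rev_induct)
  case Nil
  have "PF ([] :: 'a list) = {}" by (auto simp: PF_def is_factor_def)
  then show ?case by simp
next
  case (snoc c w)
  then show ?case using PF_snoc[of w c] by simp
qed

lemma fac_rep: "s \<le> n \<Longrightarrow> is_factor (replicate s x) (replicate n x)"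
  unfolding is_factor_def
  by (rule exI[of _ "[]"], rule exI[of _ "replicate (n - s) x"])
     (simp add: replicate_add[symmetric])

lemma fac_app: "is_factor v w \<Longrightarrow> is_factor v (p @ w @ q)"
proof -
  assume "is_factor v w"
  then obtain p' q' where "w = p' @ v @ q'" unfolding is_factor_def by blast
  then have "p @ w @ q = (p @ p') @ v @ (q' @ q)" by simp
  then show ?thesis unfolding is_factor_def by blast
qed

lemma rep_split1: "s \<le> n \<Longrightarrow> replicate n x = replicate s x @ replicate (n - s) x"
  by (simp add: replicate_add[symmetric])

lemma rep_split2: "s \<le> n \<Longrightarrow> replicate n x = replicate (n - s) x @ replicate s x"
  by (simp add: replicate_add[symmetric])

lemma rich_form:
  fixes x y :: 'a
  assumes xy: "x \<noteq> y" and j: "j \<ge> 1" and k: "k \<ge> 1"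
  shows "rich (replicate i x @ replicate j y @ replicate k x @ replicate l y)"
proof -
  define v where "v = replicate i x @ replicate j y @ replicate k x @ replicate l y"
  define F1 where "F1 = (\<lambda>s. replicate s x)"
  define F2 where "F2 = (\<lambda>s. replicate s y)"
  define F3 where "F3 = (\<lambda>s. replicate s x @ replicate j y @ replicate s x)"
  define F4 where "F4 = (\<lambda>s. replicate s y @ replicate k x @ replicate s y)"
  define S1 where "S1 = F1 ` {1..max i k}"
  define S2 where "S2 = F2 ` {1..max j l}"
  define S3 where "S3 = F3 ` {1..min i k}"
  define S4 where "S4 = F4 ` {1..min j l}"
  have c1: "card S1 = max i k" unfolding S1_def
  proof (subst card_image)
    show "inj_on F1 {1..max i k}"
    proof (rule inj_onI)
      fix s t assume "F1 s = F1 t"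
      then have "length (F1 s) = length (F1 t)" by simp
      then show "s = t" by (simp add: F1_def)
    qed
  qed simp
  have c2: "card S2 = max j l" unfolding S2_def
  proof (subst card_image)
    show "inj_on F2 {1..max j l}"
    proof (rule inj_onI)
      fix s t assume "F2 s = F2 t"
      then have "length (F2 s) = length (F2 t)" by simp
      then show "s = t" by (simp add: F2_def)
    qed
  qed simp
  have c3: "card S3 = min i k" unfolding S3_def
    proof (subst card_image)
    show "inj_on F3 {1..min i k}"
    proof (rule inj_onI)
      fix s t assume "F3 s = F3 t"
      then have "length (F3 s) = length (F3 t)" by simp
      then show "s = t" by (simp add: F3_def)
    qed
  qed simp
  have c4: "card S4 = min j l" unfolding S4_def
    proof (subst card_image)
    show "inj_on F4 {1..min j l}"
    proof (rule inj_onI)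
      fix s t assume "F4 s = F4 t"
      then have "length (F4 s) = length (F4 t)" by simp
      then show "s = t" by (simp add: F4_def)
    qed
  qed simp
  have fin: "finite S1" "finite S2" "finite S3" "finite S4"
    by (auto simp: S1_def S2_def S3_def S4_def)
  have yx: "y \<noteq> x" using xy by auto
  have P1: "\<And>u. u \<in> S1 \<Longrightarrow> y \<notin> set u \<and> x \<in> set u" using xy by (auto simp: S1_def F1_def)
  have P2: "\<And>u. u \<in> S2 \<Longrightarrow> x \<notin> set u \<and> y \<in> set u" using xy by (auto simp: S2_def F2_def)
  have P3: "\<And>u. u \<in> S3 \<Longrightarrow> x \<in> set u \<and> y \<in> set u \<and> hd u = x" using j
    by (auto simp: S3_def F3_def)
  have P4: "\<And>u. u \<in> S4 \<Longrightarrow> x \<in> set u \<and> y \<in> set u \<and> hd u = y" using k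
    by (auto simp: S4_def F4_def)
  have d12: "S1 \<inter> S2 = {}" using P1 P2 by blast
  have d3: "(S1 \<union> S2) \<inter> S3 = {}" using P1 P2 P3 by blast
  have d34: "S3 \<inter> S4 = {}"
  proof (rule ccontr)
    assume "S3 \<inter> S4 \<noteq> {}"
    then obtain u where "u \<in> S3" "u \<in> S4" by blast
    then have "hd u = x" "hd u = y" using P3 P4 by auto
    then show False using xy by simp
  qed
  have d4: "(S1 \<union> S2 \<union> S3) \<inter> S4 = {}" using P1 P2 P4 d34 by blast
  have cU: "card (S1 \<union> S2 \<union> S3 \<union> S4) = length v"
    using fin d12 d3 d4 c1 c2 c3 c4
    by (simp add: card_Un_disjoint v_def)
  have sub: "S1 \<union> S2 \<union> S3 \<union> S4 \<subseteq> PF v"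
  proof -
    have "u \<in> PF v" if hu: "u \<in> S1" for u
    proof -
      obtain s where "s \<in> {1..max i k}" "u = F1 s"
        using hu unfolding S1_def by blast
      then have s: "s \<ge> 1" "s \<le> max i k" "u = replicate s x" by (auto simp: F1_def)
      have "is_factor u v"
      proof (cases "s \<le> i")
        case True
        then show ?thesis unfolding v_def s(3)
          using fac_app[OF fac_rep[OF True, of x], where p="[]" and q="replicate j y @ replicate k x @ replicate l y"] by simp
      next
        case False
        then have "s \<le> k" using s by simp
        then show ?thesis unfolding v_def s(3)
          using fac_app[OF fac_rep[OF \<open>s \<le> k\<close>, of x], where p="replicate i x @ replicate j y" and q="replicate l y"] by simp
      qed
      then show ?thesis using s by (simp add: PF_def palindrome_def)
    qed
    moreover have "u \<in> PF v" if hu: "u \<in> S2" for u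
    proof -
      obtain s where "s \<in> {1..max j l}" "u = F2 s"
        using hu unfolding S2_def by blast
      then have s: "s \<ge> 1" "s \<le> max j l" "u = replicate s y" by (auto simp: F2_def)
      have "is_factor u v"
      proof (cases "s \<le> j")
        case True
        then show ?thesis unfolding v_def s(3)
          using fac_app[OF fac_rep[OF True, of y], where p="replicate i x" and q="replicate k x @ replicate l y"] by simp
      next
        case False
        then have "s \<le> l" using s by simp
        then show ?thesis unfolding v_def s(3)
          using fac_app[OF fac_rep[OF \<open>s \<le> l\<close>, of y], where p="replicate i x @ replicate j y @ replicate k x" and q="[]"] by simp
      qed
      then show ?thesis using s by (simp add: PF_def palindrome_def)
    qed
    moreover have "u \<in> PF v" if hu: "u \<in> S3" for u
    proof -
      obtain s where s: "s \<ge> 1" "s \<le> i" "s \<le> k" "u = F3 s"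
        using hu by (auto simp: S3_def)
      have "v = replicate (i - s) x @ u @ (replicate (k - s) x @ replicate l y)"
        unfolding v_def s(4) F3_def
        using rep_split2[OF s(2), of x] rep_split1[OF s(3), of x] by simp
      then have "is_factor u v" unfolding is_factor_def by blast
      then show ?thesis using s by (simp add: PF_def palindrome_def F3_def)
    qed
    moreover have "u \<in> PF v" if hu: "u \<in> S4" for u
    proof -
      obtain s where s: "s \<ge> 1" "s \<le> j" "s \<le> l" "u = F4 s"
        using hu by (auto simp: S4_def)
      have "v = (replicate i x @ replicate (j - s) y) @ u @ replicate (l - s) y"
        unfolding v_def s(4) F4_def
        using rep_split2[OF s(2), of y] rep_split1[OF s(3), of y] by simp
      then have "is_factor u v" unfolding is_factor_def by blast
      then show ?thesis using s by (simp add: PF_def palindrome_def F4_def)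
    qed
    ultimately show ?thesis by blast
  qed
  have "length v \<le> card (PF v)"
    using card_mono[OF PF_finite sub] cU by simp
  with PF_le[of v] have "card (PF v) = length v" by simp
  then show ?thesis unfolding v_def rich_def PF_def .
qed

lemma BR_shape:
  "concat Bs = replicate n1 a @ replicate n2 b \<Longrightarrow>
   \<exists>M X Y K. concat (rev Bs) = replicate M b @ replicate X a @ replicate Y b @ replicate K a
     \<and> M + Y = n2 \<and> X + K = n1"
proof (induction Bs arbitrary: n1 n2)
  case Nil
  then show ?case by (rule_tac x=0 in exI, rule_tac x=0 in exI, rule_tac x=0 in exI, rule_tac x=0 in exI) simp
next
  case (Cons B Bs)
  let ?w = "replicate n1 a @ replicate n2 b"
  have B: "B = take (length B) ?w" and R: "concat Bs = drop (length B) ?w"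
    using Cons.prems by (metis append_eq_conv_conj concat.simps(2))+
  show ?case
  proof (cases "length B \<le> n1")
    case True
    have "concat Bs = replicate (n1 - length B) a @ replicate n2 b" using R True by simp
    from Cons.IH[OF this] obtain M X Y K where
      h: "concat (rev Bs) = replicate M b @ replicate X a @ replicate Y b @ replicate K a"
      "M + Y = n2" "X + K = n1 - length B" by blast
    have "B = replicate (length B) a" using B True by simp
    then have "concat (rev (B # Bs)) = replicate M b @ replicate X a @ replicate Y b @ replicate (K + length B) a"
      using h(1) by (simp add: replicate_add)
    then show ?thesis using h True by (intro exI[of _ M] exI[of _ X] exI[of _ Y] exI[of _ "K + length B"]) simp
  next
    case False
    have "concat Bs = replicate 0 a @ replicate (n2 - (length B - n1)) b" using R False by simp
    from Cons.IH[OF this] obtain M X Y K where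
      h: "concat (rev Bs) = replicate M b @ replicate X a @ replicate Y b @ replicate K a"
      "M + Y = n2 - (length B - n1)" "X + K = 0" by blast
    have "length B \<le> n1 + n2" using arg_cong[OF B, of length] by simp
    have "B = replicate n1 a @ replicate (length B - n1) b" using B False \<open>length B \<le> n1 + n2\<close> by simp
    then have "concat (rev (B # Bs)) = replicate (M + Y) b @ replicate n1 a @ replicate (length B - n1) b @ replicate 0 a"
      using h(1) h(3) by (simp add: replicate_add)
    then show ?thesis using h False \<open>length B \<le> n1 + n2\<close>
      apply (rule_tac x="M + Y" in exI, rule_tac x=n1 in exI, rule_tac x="length B - n1" in exI, rule_tac x=0 in exI)
      by simp
  qed
qed

theorem mainTheorem6:
  fixes a b :: 'a and n1 n2 :: nat and v :: "'a list"
  assumes "a \<noteq> b" and "n1 \<ge> 1" and "n2 \<ge> 1"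
    and "v \<in> BR (replicate n1 a @ replicate n2 b)"
  shows "rich v"
proof -
  obtain Bs where "v = concat (rev Bs)" "concat Bs = replicate n1 a @ replicate n2 b"
    using assms(4) by (auto simp: BR_def)
  then obtain M X Y K where
    h: "v = replicate M b @ replicate X a @ replicate Y b @ replicate K a"
      "M + Y = n2" "X + K = n1" using BR_shape[of Bs n1 a n2 b] by auto
  show ?thesis
  proof (cases "X = 0 \<or> Y = 0")
    case True
    then have "v = replicate 0 a @ replicate n2 b @ replicate n1 a @ replicate 0 b"
      using h by (auto simp: replicate_add[symmetric])
    then show ?thesis using rich_form[of a b n2 n1 0 0] assms by simp
  next
    case False
    then show ?thesis using rich_form[of b a X Y M K] assms h by simp
  qed
qed

end
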